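(* Let $n\ge1$, $\tau\in\mathbb R$, and let $P_1,\dots,P_J$ be Hermitian operators on $(\mathbb C^2)^{\otimes n}$, each equal to $\pm P$ for some non-identity Pauli string $P\in\{I,X,Y,Z\}^{\otimes n}\setminus\{I^{\otimes n}\}$. Define $$A=\Big(\prod_{j=1}^{J} e^{-\tau P_j}\Big)\,\mathbb I\,\Big(\prod_{j=J}^{1} e^{-\tau P_j}\Big),$$ where the first product is ordered $e^{-\tau P_1}e^{-\tau P_2}\cdots e^{-\tau P_J}$ and the second $e^{-\tau P_J}\cdots e^{-\tau P_1}$. Then $\operatorname{Tr}[A]\ge 2^n$. *)

theory Defs
  imports Complex_Main "Jordan_Normal_Form.Matrix"
begin

definition kron :: "'a::times mat \<Rightarrow> 'a mat \<Rightarrow> 'a mat" where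
  "kron A B = mat (dim_row A * dim_row B) (dim_col A * dim_col B)
     (\<lambda>(i,j). A $$ (i div dim_row B, j div dim_col B) * B $$ (i mod dim_row B, j mod dim_col B))"

datatype pauli = PI | PX | PY | PZ

fun pauli_mat :: "pauli \<Rightarrow> complex mat" where
  "pauli_mat PI = mat_of_rows_list 2 [[1, 0], [0, 1]]"
| "pauli_mat PX = mat_of_rows_list 2 [[0, 1], [1, 0]]"
| "pauli_mat PY = mat_of_rows_list 2 [[0, - \<i>], [\<i>, 0]]"
| "pauli_mat PZ = mat_of_rows_list 2 [[1, 0], [0, -1]]"

definition pauli_string :: "pauli list \<Rightarrow> complex mat" where
  "pauli_string ps = foldr (\<lambda>p M. kron (pauli_mat p) M) ps (1\<^sub>m 1)"

definition mat_exp :: "complex mat \<Rightarrow> complex mat" where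
  "mat_exp A = mat (dim_row A) (dim_col A)
     (\<lambda>(i,j). \<Sum>k. (A ^\<^sub>m k) $$ (i,j) / of_nat (fact k))"

definition mat_prod_list :: "nat \<Rightarrow> complex mat list \<Rightarrow> complex mat" where
  "mat_prod_list N Ms = foldr (\<lambda>M R. M * R) Ms (1\<^sub>m N)"

definition mat_trace :: "complex mat \<Rightarrow> complex" where
  "mat_trace A = (\<Sum>i<dim_row A. A $$ (i,i))"

end

theory Submission
  imports Defs "Jordan_Normal_Form.Schur_Decomposition"
begin
lemma sum_split_mult: fixes a b :: nat shows "(\<Sum>k<a*b. f k) = (\<Sum>p<a. \<Sum>q<b. f (p*b+q) :: 'a::comm_monoid_add)"
proof (induction a)
  case 0 then show ?case by simp
next
  case (Suc a)
  have "(\<Sum>k<Suc a*b. f k) = (\<Sum>k\<in>{0..<a*b + b}. f k)" by (simp add: add.commute lessThan_atLeast0)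
  also have "\<dots> = (\<Sum>k\<in>{0..<a*b}. f k) + (\<Sum>k\<in>{a*b..<a*b+b}. f k)"
    by (rule sum.atLeastLessThan_concat[symmetric]) auto
  also have "(\<Sum>k\<in>{a*b..<a*b+b}. f k) = (\<Sum>q<b. f (a*b+q))"
    by (subst sum.atLeastLessThan_shift_0) (simp add: lessThan_atLeast0 comp_def)
  finally show ?case using Suc by (simp add: lessThan_atLeast0)
qed

lemma divlt: fixes i a b :: nat shows "i < a*b \<Longrightarrow> i div b < a"
  by (simp add: less_mult_imp_div_less)
lemma modlt: fixes i a b :: nat shows "i < a*b \<Longrightarrow> i mod b < b"
  by (metis mod_less_divisor mult_0_right not_less_zero gr0I)
lemma bpos: fixes i a b :: nat shows "i < a*b \<Longrightarrow> 0 < b"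
  by (metis mult_0_right not_less_zero gr0I)

lemma kron_dims[simp]: "dim_row (kron A B) = dim_row A * dim_row B" "dim_col (kron A B) = dim_col A * dim_col B"
  by (simp_all add: kron_def)

lemma kron_carrier: "A \<in> carrier_mat a a' \<Longrightarrow> B \<in> carrier_mat b b' \<Longrightarrow> kron A B \<in> carrier_mat (a*b) (a'*b')"
  by (intro carrier_matI) (auto dest: carrier_matD)

lemma kron_index: "i < dim_row A * dim_row B \<Longrightarrow> j < dim_col A * dim_col B \<Longrightarrow>
  kron A B $$ (i,j) = A $$ (i div dim_row B, j div dim_col B) * B $$ (i mod dim_row B, j mod dim_col B)"
  by (simp add: kron_def)

lemma mult_index_sum: "A \<in> carrier_mat n m \<Longrightarrow> B \<in> carrier_mat m p \<Longrightarrow> i < n \<Longrightarrow> j < p \<Longrightarrow>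
  (A * B) $$ (i,j) = (\<Sum>k<m. A $$ (i,k) * B $$ (k,j))"
  by (simp add: scalar_prod_def lessThan_atLeast0)

lemma kron_mult:
  fixes A C :: "'a::comm_ring_1 mat"
  assumes A: "A \<in> carrier_mat a a" and C: "C \<in> carrier_mat a a"
    and B: "B \<in> carrier_mat b b" and D: "D \<in> carrier_mat b b"
  shows "kron A B * kron C D = kron (A*C) (B*D)"
proof (rule eq_matI)
  note dims = carrier_matD[OF A] carrier_matD[OF B] carrier_matD[OF C] carrier_matD[OF D]
  show "dim_row (kron A B * kron C D) = dim_row (kron (A*C) (B*D))"
       "dim_col (kron A B * kron C D) = dim_col (kron (A*C) (B*D))" using dims by auto
  fix i j assume i: "i < dim_row (kron (A*C) (B*D))" and j: "j < dim_col (kron (A*C) (B*D))"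
  then have i: "i < a*b" and j: "j < a*b" using dims by auto
  have b0: "b > 0" using bpos[OF i] .
  have id: "i div b < a" "j div b < a" "i mod b < b" "j mod b < b"
    using divlt[OF i] divlt[OF j] modlt[OF i] modlt[OF j] by auto
  have "(kron A B * kron C D) $$ (i,j) = (\<Sum>k<a*b. kron A B $$ (i,k) * kron C D $$ (k,j))"
    by (rule mult_index_sum[OF kron_carrier[OF A B] kron_carrier[OF C D] i j])
  also have "\<dots> = (\<Sum>p<a. \<Sum>q<b. kron A B $$ (i,p*b+q) * kron C D $$ (p*b+q,j))"
    by (rule sum_split_mult)
  also have "\<dots> = (\<Sum>p<a. \<Sum>q<b. (A $$ (i div b, p) * C $$ (p, j div b)) * (B $$ (i mod b, q) * D $$ (q, j mod b)))"
  proof (intro sum.cong refl)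
    fix p q assume p: "p \<in> {..<a}" and q: "q \<in> {..<b}"
    have "p*b+q < (p+1)*b" using q by simp
    also have "(p+1)*b \<le> a*b" using p by (intro mult_right_mono) auto
    finally have pq: "p*b+q < a*b" .
    have d1: "(p*b+q) div b = p" "(p*b+q) mod b = q" using q b0 by auto
    show "kron A B $$ (i,p*b+q) * kron C D $$ (p*b+q,j) = (A $$ (i div b, p) * C $$ (p, j div b)) * (B $$ (i mod b, q) * D $$ (q, j mod b))"
      using dims i j pq d1 by (simp add: kron_index)
  qed
  also have "\<dots> = (A*C) $$ (i div b, j div b) * (B*D) $$ (i mod b, j mod b)"
    by (simp add: mult_index_sum[OF A C id(1,2)] mult_index_sum[OF B D id(3,4)] sum_product)
  also have "\<dots> = kron (A*C) (B*D) $$ (i,j)" using dims i j by (simp add: kron_index)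
  finally show "(kron A B * kron C D) $$ (i,j) = kron (A*C) (B*D) $$ (i,j)" .
qed

lemma kron_one: "kron (1\<^sub>m a) (1\<^sub>m b) = (1\<^sub>m (a*b) :: 'a::comm_ring_1 mat)"
proof (rule eq_matI)
  fix i j assume i: "i < dim_row (1\<^sub>m (a*b) :: 'a mat)" and j: "j < dim_col (1\<^sub>m (a*b) :: 'a mat)"
  then have i: "i < a*b" and j: "j < a*b" by auto
  have b0: "b > 0" using bpos[OF i] .
  have id: "i div b < a" "j div b < a" "i mod b < b" "j mod b < b"
    using divlt[OF i] divlt[OF j] modlt[OF i] modlt[OF j] by auto
  have ij: "(i = j) = (i div b = j div b \<and> i mod b = j mod b)"
    by (metis div_mult_mod_eq)
  have "kron (1\<^sub>m a) (1\<^sub>m b) $$ (i,j) = (1\<^sub>m a :: 'a mat) $$ (i div b, j div b) * (1\<^sub>m b :: 'a mat) $$ (i mod b, j mod b)"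
    using i j by (simp add: kron_index)
  then show "kron (1\<^sub>m a) (1\<^sub>m b) $$ (i,j) = (1\<^sub>m (a*b) :: 'a mat) $$ (i,j)"
    using i j id unfolding index_one_mat(1)[OF i j] index_one_mat(1)[OF id(1,2)] index_one_mat(1)[OF id(3,4)]
    by (cases "i = j") (simp, simp add: ij)
qed auto

definition adj :: "complex mat \<Rightarrow> complex mat" where
  "adj X = mat (dim_col X) (dim_row X) (\<lambda>(i,j). cnj (X $$ (j,i)))"

lemma adj_dims[simp]: "dim_row (adj X) = dim_col X" "dim_col (adj X) = dim_row X"
  by (simp_all add: adj_def)

lemma adj_index[simp]: "i < dim_col X \<Longrightarrow> j < dim_row X \<Longrightarrow> adj X $$ (i,j) = cnj (X $$ (j,i))"
  by (simp add: adj_def)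

lemma adj_carrier: "X \<in> carrier_mat n m \<Longrightarrow> adj X \<in> carrier_mat m n"
  by (intro carrier_matI) (auto dest: carrier_matD)

lemma kron_adj: "adj (kron A B) = kron (adj A) (adj B)"
proof (rule eq_matI)
  fix i j assume "i < dim_row (kron (adj A) (adj B))" "j < dim_col (kron (adj A) (adj B))"
  then have i: "i < dim_col A * dim_col B" and j: "j < dim_row A * dim_row B" by auto
  have id: "i div dim_col B < dim_col A" "j div dim_row B < dim_row A" "i mod dim_col B < dim_col B" "j mod dim_row B < dim_row B"
    using divlt[OF i] divlt[OF j] modlt[OF i] modlt[OF j] by auto
  show "adj (kron A B) $$ (i,j) = kron (adj A) (adj B) $$ (i,j)"
    using i j id by (simp add: kron_index)
qed auto

definition tr :: "'a::comm_ring_1 mat \<Rightarrow> 'a" where "tr X = (\<Sum>i<dim_row X. X $$ (i,i))"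

lemma kron_tr: assumes A: "A \<in> carrier_mat a a" and B: "B \<in> carrier_mat b b"
  shows "tr (kron A B) = tr A * tr B"
proof -
  note dims = carrier_matD[OF A] carrier_matD[OF B]
  have "tr (kron A B) = (\<Sum>k<a*b. kron A B $$ (k,k))" using dims by (simp add: tr_def)
  also have "\<dots> = (\<Sum>p<a. \<Sum>q<b. kron A B $$ (p*b+q,p*b+q))" by (rule sum_split_mult)
  also have "\<dots> = (\<Sum>p<a. \<Sum>q<b. A $$ (p,p) * B $$ (q,q))"
  proof (intro sum.cong refl)
    fix p q assume p: "p \<in> {..<a}" and q: "q \<in> {..<b}"
    have "p*b+q < (p+1)*b" using q by simp
    also have "(p+1)*b \<le> a*b" using p by (intro mult_right_mono) auto
    finally have pq: "p*b+q < a*b" .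
    have d1: "(p*b+q) div b = p" "(p*b+q) mod b = q" using q by auto
    show "kron A B $$ (p*b+q,p*b+q) = A $$ (p,p) * B $$ (q,q)" using dims pq d1 by (simp add: kron_index)
  qed
  also have "\<dots> = tr A * tr B" using dims by (simp add: tr_def sum_product)
  finally show ?thesis .
qed


lemma lt2: "i < (2::nat) \<Longrightarrow> i = 0 \<or> i = 1" by auto

lemma pauli_carrier: "pauli_mat p \<in> carrier_mat 2 2"
  by (cases p) (auto simp: mat_of_rows_list_def)

lemma pauli_sq: "pauli_mat p * pauli_mat p = 1\<^sub>m 2"
proof (rule eq_matI)
  fix i j assume "i < dim_row (1\<^sub>m 2 :: complex mat)" "j < dim_col (1\<^sub>m 2 :: complex mat)"
  then have i: "i < 2" and j: "j < 2" by auto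
  have "(pauli_mat p * pauli_mat p) $$ (i,j) = (\<Sum>k<2. pauli_mat p $$ (i,k) * pauli_mat p $$ (k,j))"
    by (rule mult_index_sum[OF pauli_carrier pauli_carrier i j])
  also have "\<dots> = pauli_mat p $$ (i,0) * pauli_mat p $$ (0,j) + pauli_mat p $$ (i,1) * pauli_mat p $$ (1,j)"
    by (simp add: numeral_2_eq_2)
  also have "\<dots> = (1\<^sub>m 2 :: complex mat) $$ (i,j)"
    using lt2[OF i] lt2[OF j] by (cases p) (auto simp: mat_of_rows_list_def)
  finally show "(pauli_mat p * pauli_mat p) $$ (i,j) = (1\<^sub>m 2 :: complex mat) $$ (i,j)" .
qed (use pauli_carrier[of p] in \<open>auto dest: carrier_matD\<close>)

lemma pauli_adj: "adj (pauli_mat p) = pauli_mat p"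
proof (rule eq_matI)
  fix i j assume "i < dim_row (pauli_mat p)" "j < dim_col (pauli_mat p)"
  then have i: "i < 2" and j: "j < 2" using pauli_carrier[of p] by (auto dest: carrier_matD)
  show "adj (pauli_mat p) $$ (i,j) = pauli_mat p $$ (i,j)"
    using lt2[OF i] lt2[OF j] pauli_carrier[of p] by (cases p) (auto simp: mat_of_rows_list_def)
qed (use pauli_carrier[of p] in \<open>auto dest: carrier_matD\<close>)

lemma pauli_tr: "tr (pauli_mat p) = (if p = PI then 2 else 0)"
  by (cases p) (auto simp: tr_def mat_of_rows_list_def numeral_2_eq_2)

lemma ps_Cons: "pauli_string (p # s) = kron (pauli_mat p) (pauli_string s)"
  by (simp add: pauli_string_def)

lemma ps_carrier: "pauli_string s \<in> carrier_mat (2^length s) (2^length s)"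
proof (induction s)
  case Nil then show ?case by (simp add: pauli_string_def)
next
  case (Cons p s) then show ?case
    using kron_carrier[OF pauli_carrier Cons] by (simp add: ps_Cons)
qed

lemma ps_sq: "pauli_string s * pauli_string s = 1\<^sub>m (2^length s)"
proof (induction s)
  case Nil then show ?case by (simp add: pauli_string_def)
next
  case (Cons p s) then show ?case
    by (simp add: ps_Cons kron_mult[OF pauli_carrier pauli_carrier ps_carrier ps_carrier] pauli_sq kron_one)
qed

lemma ps_adj: "adj (pauli_string s) = pauli_string s"
proof (induction s)
  case Nil then show ?case
    by (auto simp: pauli_string_def intro!: eq_matI)
next
  case (Cons p s) then show ?case
    by (simp add: ps_Cons kron_adj pauli_adj)
qed

lemma ps_tr: "s \<noteq> replicate (length s) PI \<Longrightarrow> tr (pauli_string s) = 0"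
proof (induction s)
  case Nil then show ?case by simp
next
  case (Cons p s) then show ?case
    by (auto simp add: ps_Cons kron_tr[OF pauli_carrier ps_carrier] pauli_tr)
qed


lemma smult_smult_mat': "a \<cdot>\<^sub>m (b \<cdot>\<^sub>m X) = (a * b :: 'a::semiring_0) \<cdot>\<^sub>m X"
  by (rule eq_matI) (auto simp: mult.assoc)

lemma pow_invol: assumes P: "P \<in> carrier_mat N N" and PP: "P * P = 1\<^sub>m N"
  shows "P ^\<^sub>m k = (if even k then 1\<^sub>m N else (P :: complex mat))"
proof (induction k)
  case 0 then show ?case using carrier_matD[OF P] by simp
next
  case (Suc k) then show ?case
    using P PP carrier_matD[OF P] by (auto simp: left_mult_one_mat)
qed

lemma pow_smult: assumes P: "P \<in> carrier_mat N N"
  shows "(c \<cdot>\<^sub>m P) ^\<^sub>m k = c^k \<cdot>\<^sub>m (P ^\<^sub>m k :: complex mat)"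
proof (induction k)
  case 0 then show ?case using P by (auto intro!: eq_matI dest: carrier_matD)
next
  case (Suc k)
  have "(c \<cdot>\<^sub>m P) ^\<^sub>m Suc k = (c^k \<cdot>\<^sub>m (P ^\<^sub>m k)) * (c \<cdot>\<^sub>m P)" using Suc by simp
  also have "\<dots> = c^k \<cdot>\<^sub>m ((P ^\<^sub>m k) * (c \<cdot>\<^sub>m P))"
    by (rule mult_smult_assoc_mat[OF pow_carrier_mat[OF P] smult_carrier_mat[OF P]])
  also have "(P ^\<^sub>m k) * (c \<cdot>\<^sub>m P) = c \<cdot>\<^sub>m (P ^\<^sub>m k * P)"
    by (rule mult_smult_distrib[OF pow_carrier_mat[OF P] P])
  finally show ?case by (simp add: smult_smult_mat' mult.commute)
qed

lemma mat_exp_invol: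
  assumes P: "P \<in> carrier_mat N N" and PP: "P * P = 1\<^sub>m N"
  shows "mat_exp (complex_of_real x \<cdot>\<^sub>m P) =
    complex_of_real (cosh x) \<cdot>\<^sub>m 1\<^sub>m N + complex_of_real (sinh x) \<cdot>\<^sub>m P"
proof (rule eq_matI)
  note dims = carrier_matD[OF P]
  fix i j assume "i < dim_row (complex_of_real (cosh x) \<cdot>\<^sub>m 1\<^sub>m N + complex_of_real (sinh x) \<cdot>\<^sub>m P)"
    "j < dim_col (complex_of_real (cosh x) \<cdot>\<^sub>m 1\<^sub>m N + complex_of_real (sinh x) \<cdot>\<^sub>m P)"
  then have i: "i < N" and j: "j < N" using dims by auto
  define d where "d = (1\<^sub>m N :: complex mat) $$ (i,j)"
  have trm: "((complex_of_real x \<cdot>\<^sub>m P) ^\<^sub>m k) $$ (i,j) / of_nat (fact k) =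
     complex_of_real (if even k then x^k /\<^sub>R fact k else 0) * d +
     complex_of_real (if even k then 0 else x^k /\<^sub>R fact k) * P $$ (i,j)" for k
    using i j dims unfolding pow_smult[OF P] pow_invol[OF P PP] d_def
    by (auto simp: divide_inverse)
  have s: "(\<lambda>k. ((complex_of_real x \<cdot>\<^sub>m P) ^\<^sub>m k) $$ (i,j) / of_nat (fact k)) sums
     (complex_of_real (cosh x) * d + complex_of_real (sinh x) * P $$ (i,j))"
    unfolding trm
    by (intro sums_add sums_mult2 sums_of_real cosh_converges sinh_converges)
  have "mat_exp (complex_of_real x \<cdot>\<^sub>m P) $$ (i,j) = (\<Sum>k. ((complex_of_real x \<cdot>\<^sub>m P) ^\<^sub>m k) $$ (i,j) / of_nat (fact k))"
    using i j dims by (simp add: mat_exp_def)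
  also have "\<dots> = complex_of_real (cosh x) * d + complex_of_real (sinh x) * P $$ (i,j)"
    using s by (rule sums_unique[symmetric])
  also have "\<dots> = (complex_of_real (cosh x) \<cdot>\<^sub>m 1\<^sub>m N + complex_of_real (sinh x) \<cdot>\<^sub>m P) $$ (i,j)"
    using i j dims by (simp add: d_def)
  finally show "mat_exp (complex_of_real x \<cdot>\<^sub>m P) $$ (i,j) = (complex_of_real (cosh x) \<cdot>\<^sub>m 1\<^sub>m N + complex_of_real (sinh x) \<cdot>\<^sub>m P) $$ (i,j)" .
qed (use carrier_matD[OF P] in \<open>auto simp: mat_exp_def\<close>)


lemma adj_mult: assumes X: "X \<in> carrier_mat n m" and Y: "Y \<in> carrier_mat m p"
  shows "adj (X * Y) = adj Y * adj X"
proof (rule eq_matI)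
  note dims = carrier_matD[OF X] carrier_matD[OF Y]
  fix i j assume "i < dim_row (adj Y * adj X)" "j < dim_col (adj Y * adj X)"
  then have i: "i < p" and j: "j < n" using dims by auto
  have "adj (X * Y) $$ (i,j) = cnj ((X*Y) $$ (j,i))" using i j dims by simp
  also have "\<dots> = cnj (\<Sum>k<m. X $$ (j,k) * Y $$ (k,i))" by (simp add: mult_index_sum[OF X Y j i])
  also have "\<dots> = (\<Sum>k<m. adj Y $$ (i,k) * adj X $$ (k,j))"
    using i j dims by (simp add: mult.commute)
  also have "\<dots> = (adj Y * adj X) $$ (i,j)"
    by (simp add: mult_index_sum[OF adj_carrier[OF Y] adj_carrier[OF X] i j])
  finally show "adj (X * Y) $$ (i,j) = (adj Y * adj X) $$ (i,j)" .
qed (use carrier_matD[OF X] carrier_matD[OF Y] in auto)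

lemma mpl_carrier: "(\<forall>M\<in>set Ms. M \<in> carrier_mat N N) \<Longrightarrow> mat_prod_list N Ms \<in> carrier_mat N N"
  by (induction Ms) (auto simp: mat_prod_list_def)

lemma mpl_snoc: "(\<forall>M\<in>set Ms. M \<in> carrier_mat N N) \<Longrightarrow> X \<in> carrier_mat N N \<Longrightarrow>
  mat_prod_list N (Ms @ [X]) = mat_prod_list N Ms * X"
proof (induction Ms)
  case Nil then show ?case by (simp add: mat_prod_list_def)
next
  case (Cons M Ms)
  then have "mat_prod_list N (M # Ms @ [X]) = M * (mat_prod_list N Ms * X)"
    by (simp add: mat_prod_list_def)
  also have "\<dots> = (M * mat_prod_list N Ms) * X"
    using Cons.prems mpl_carrier[of Ms N] by (simp add: assoc_mult_mat[symmetric, of M N N _ N X N])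
  finally show ?case by (simp add: mat_prod_list_def)
qed

lemma mpl_det: "(\<forall>M\<in>set Ms. M \<in> carrier_mat N N) \<Longrightarrow> det (mat_prod_list N Ms) = prod_list (map det Ms)"
proof (induction Ms)
  case Nil then show ?case by (simp add: mat_prod_list_def)
next
  case (Cons M Ms) then show ?case
    using det_mult[of M N "mat_prod_list N Ms"] mpl_carrier[of Ms N] by (simp add: mat_prod_list_def)
qed

lemma adj_one: "adj (1\<^sub>m N) = 1\<^sub>m N"
  by (rule eq_matI) auto

lemma mpl_rev: "(\<forall>M\<in>set Ms. M \<in> carrier_mat N N \<and> adj M = M) \<Longrightarrow>
  mat_prod_list N (rev Ms) = adj (mat_prod_list N Ms)"
proof (induction Ms)
  case Nil then show ?case by (simp add: mat_prod_list_def adj_one)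
next
  case (Cons M Ms)
  have c: "\<forall>M\<in>set (rev Ms). M \<in> carrier_mat N N" using Cons.prems by auto
  have "mat_prod_list N (rev (M # Ms)) = mat_prod_list N (rev Ms) * M"
    using Cons.prems by (simp add: mpl_snoc[OF c])
  also have "\<dots> = adj (mat_prod_list N Ms) * adj M" using Cons by simp
  also have "\<dots> = adj (M * mat_prod_list N Ms)"
    using Cons.prems mpl_carrier[of Ms N] by (simp add: adj_mult[of M N N _ N])
  finally show ?case by (simp add: mat_prod_list_def)
qed

lemma tr_comm: assumes X: "X \<in> carrier_mat n m" and Y: "Y \<in> carrier_mat m n"
  shows "tr (X * Y) = tr (Y * X)"
proof -
  note dims = carrier_matD[OF X] carrier_matD[OF Y]
  have "tr (X * Y) = (\<Sum>i<n. (X * Y) $$ (i,i))" using dims by (simp add: tr_def)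
  also have "\<dots> = (\<Sum>i<n. \<Sum>k<m. X $$ (i,k) * Y $$ (k,i))"
  proof (rule sum.cong)
    fix i assume "i \<in> {..<n}"
    then show "(X * Y) $$ (i,i) = (\<Sum>k<m. X $$ (i,k) * Y $$ (k,i))"
      by (intro mult_index_sum[OF X Y]) auto
  qed simp
  also have "\<dots> = (\<Sum>k<m. \<Sum>i<n. Y $$ (k,i) * X $$ (i,k))"
    by (subst sum.swap) (simp add: mult.commute)
  also have "\<dots> = (\<Sum>k<m. (Y * X) $$ (k,k))"
  proof (rule sum.cong)
    fix k assume "k \<in> {..<m}"
    then show "(\<Sum>i<n. Y $$ (k,i) * X $$ (i,k)) = (Y * X) $$ (k,k)"
      by (intro mult_index_sum[OF Y X, symmetric]) auto
  qed simp
  also have "\<dots> = tr (Y * X)" using dims by (simp add: tr_def)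
  finally show ?thesis .
qed

lemma prod_list_pos: "(\<forall>r\<in>set rs. (0::real) < r) \<Longrightarrow> prod_list rs > 0"
  by (induction rs) auto

lemma sum_ge_len_aux: "(\<forall>r\<in>set rs. (0::real) < r) \<Longrightarrow> sum_list rs \<ge> real (length rs) + ln (prod_list rs)"
proof (induction rs)
  case Nil then show ?case by simp
next
  case (Cons r rs)
  have r: "r > 0" and p: "prod_list rs > 0" using Cons.prems by (auto intro: prod_list_pos)
  have "ln (prod_list (r # rs)) = ln r + ln (prod_list rs)" using r p by (simp add: ln_mult del: prod_list_zero_iff)
  then show ?case using Cons ln_le_minus_one[OF r] by simp
qed

lemma sum_ge_len: "(\<forall>r\<in>set rs. (0::real) \<le> r) \<Longrightarrow> prod_list rs = 1 \<Longrightarrow> sum_list rs \<ge> real (length rs)"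
proof -
  assume nn: "\<forall>r\<in>set rs. (0::real) \<le> r" and p: "prod_list rs = 1"
  have "\<forall>r\<in>set rs. 0 < r"
  proof
    fix r assume "r \<in> set rs"
    moreover have "r \<noteq> 0" using p \<open>r \<in> set rs\<close> by (metis prod_list_zero_iff zero_neq_one)
    ultimately show "0 < r" using nn by force
  qed
  from sum_ge_len_aux[OF this] p show ?thesis by simp
qed


lemma mv_index: "A \<in> carrier_mat n m \<Longrightarrow> v \<in> carrier_vec m \<Longrightarrow> i < n \<Longrightarrow>
  (A *\<^sub>v v) $ i = (\<Sum>k<m. A $$ (i,k) * v $ k)"
  by (auto simp: scalar_prod_def lessThan_atLeast0)

lemma schur_ex: fixes A :: "complex mat" assumes A: "A \<in> carrier_mat N N"
  shows "\<exists>B U V. B \<in> carrier_mat N N \<and> U \<in> carrier_mat N N \<and> V \<in> carrier_mat N N \<and>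
     U * V = 1\<^sub>m N \<and> V * U = 1\<^sub>m N \<and> A = U * B * V \<and> upper_triangular B \<and>
     (\<forall>i<N. eigenvalue A (B $$ (i,i)))"
proof -
  obtain es where cp: "char_poly A = (\<Prod>a\<leftarrow>es. [:- a, 1:])" and len: "length es = N"
    using char_poly_factorized[OF A] by blast
  obtain B U V where sd: "schur_decomposition A es = (B,U,V)" by (cases "schur_decomposition A es") auto
  from schur_decomposition[OF A cp sd]
  have sim: "similar_mat_wit A B U V" and ut: "upper_triangular B" and dg: "diag_mat B = es" by auto
  have dA: "dim_row A = N" using A by auto
  from sim have c: "B \<in> carrier_mat N N" "U \<in> carrier_mat N N" "V \<in> carrier_mat N N"
     "U * V = 1\<^sub>m N" "V * U = 1\<^sub>m N" "A = U * B * V"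
    unfolding similar_mat_wit_def Let_def dA by auto
  have ev: "eigenvalue A (B $$ (i,i))" if i: "i < N" for i
  proof -
    have "B $$ (i,i) \<in> set es" using i c(1) dg[symmetric] by (auto simp: diag_mat_def)
    then have "poly (char_poly A) (B $$ (i,i)) = 0"
      unfolding cp by (auto simp: poly_prod_list prod_list_zero_iff)
    then show ?thesis using eigenvalue_root_char_poly[OF A] by blast
  qed
  show ?thesis using c ut ev by blast
qed

lemma eig_psd: fixes M :: "complex mat" assumes M: "M \<in> carrier_mat N N"
  and ev: "eigenvalue (M * adj M) e"
  shows "\<exists>r\<ge>0. e = complex_of_real r"
proof -
  have MA: "M * adj M \<in> carrier_mat N N" using M adj_carrier[OF M] by (rule mult_carrier_mat)
  from ev obtain v where v: "v \<in> carrier_vec N" "v \<noteq> 0\<^sub>v N" "(M * adj M) *\<^sub>v v = e \<cdot>\<^sub>v v"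
    unfolding eigenvalue_def eigenvector_def using carrier_matD[OF MA] by auto
  define u where "u = adj M *\<^sub>v v"
  have u: "u \<in> carrier_vec N" unfolding u_def using adj_carrier[OF M] v(1) by auto
  have Muv: "(M * adj M) *\<^sub>v v = M *\<^sub>v u" unfolding u_def
    using M adj_carrier[OF M] v(1) by simp
  have uk: "u $ k = (\<Sum>j<N. cnj (M $$ (j,k)) * v $ j)" if k: "k < N" for k
    unfolding u_def using mv_index[OF adj_carrier[OF M] v(1) k] k carrier_matD[OF M] by simp
  have "(\<Sum>i<N. cnj (v $ i) * ((M * adj M) *\<^sub>v v) $ i) = e * (\<Sum>i<N. cnj (v $ i) * v $ i)"
    using v by (simp add: sum_distrib_left mult.left_commute)
  moreover have "(\<Sum>i<N. cnj (v $ i) * ((M * adj M) *\<^sub>v v) $ i) = (\<Sum>k<N. cnj (u $ k) * u $ k)"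
  proof -
    have "(\<Sum>i<N. cnj (v $ i) * ((M * adj M) *\<^sub>v v) $ i) = (\<Sum>i<N. cnj (v $ i) * (\<Sum>k<N. M $$ (i,k) * u $ k))"
      unfolding Muv by (intro sum.cong refl) (simp add: mv_index[OF M u])
    also have "\<dots> = (\<Sum>k<N. (\<Sum>i<N. cnj (v $ i) * M $$ (i,k)) * u $ k)"
      by (simp add: sum_distrib_left sum_distrib_right mult.assoc) (rule sum.swap)
    also have "\<dots> = (\<Sum>k<N. cnj (u $ k) * u $ k)"
      by (intro sum.cong refl) (simp add: uk mult.commute)
    finally show ?thesis .
  qed
  ultimately have eq: "e * (\<Sum>i<N. cnj (v $ i) * v $ i) = (\<Sum>k<N. cnj (u $ k) * u $ k)" by simp
  have cn: "cnj z * z = complex_of_real ((cmod z)^2)" for z by (metis complex_norm_square mult.commute)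
  define S where "S = (\<Sum>i<N. (cmod (v $ i))^2)"
  define T where "T = (\<Sum>k<N. (cmod (u $ k))^2)"
  have eq2: "e * complex_of_real S = complex_of_real T" using eq unfolding S_def T_def cn by simp
  obtain i where i: "i < N" "v $ i \<noteq> 0"
  proof (rule ccontr)
    assume "\<not> thesis"
    then have "\<forall>i<N. v $ i = 0" using that by blast
    then have "v = 0\<^sub>v N" using v(1) by (intro eq_vecI) auto
    then show False using v(2) by simp
  qed
  have "S \<ge> (cmod (v $ i))^2" unfolding S_def
    by (rule member_le_sum[of i "{..<N}" "\<lambda>i. (cmod (v $ i))^2"]) (use i in auto)
  moreover have "(cmod (v $ i))^2 > 0" using i by simp
  ultimately have Spos: "S > 0" by linarith
  have Tnn: "T \<ge> 0" unfolding T_def by (intro sum_nonneg) auto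
  have "e = complex_of_real (T / S)" using eq2 Spos
    by (simp add: field_simps flip: of_real_mult)
  then show ?thesis using Tnn Spos by (intro exI[of _ "T/S"]) auto
qed


lemma key: fixes M :: "complex mat" assumes M: "M \<in> carrier_mat N N" and d: "det (M * adj M) = 1"
  shows "tr (M * adj M) \<in> \<real> \<and> Re (tr (M * adj M)) \<ge> real N"
proof -
  have A: "M * adj M \<in> carrier_mat N N" using M adj_carrier[OF M] by (rule mult_carrier_mat)
  obtain B U V where B: "B \<in> carrier_mat N N" and U: "U \<in> carrier_mat N N" and V: "V \<in> carrier_mat N N"
    and UV: "U * V = 1\<^sub>m N" and VU: "V * U = 1\<^sub>m N" and AB: "M * adj M = U * B * V"
    and ut: "upper_triangular B" and ev: "\<forall>i<N. eigenvalue (M * adj M) (B $$ (i,i))"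
    using schur_ex[OF A] by blast
  have UB: "U * B \<in> carrier_mat N N" using U B by (rule mult_carrier_mat)
  have "det (M * adj M) = det U * det B * det V"
    unfolding AB by (simp add: det_mult[OF UB V] det_mult[OF U B])
  also have "\<dots> = det (U * V) * det B" by (simp add: det_mult[OF U V])
  finally have detB: "det B = 1" using d UV by simp
  have "tr (M * adj M) = tr (V * (U * B))" unfolding AB by (rule tr_comm[OF UB V])
  also have "V * (U * B) = B" using V U B VU by (simp add: assoc_mult_mat[symmetric, OF V U B])
  finally have trB: "tr (M * adj M) = tr B" .
  define r where "r i = Re (B $$ (i,i))" for i
  have Bii: "B $$ (i,i) = complex_of_real (r i)" and rnn: "r i \<ge> 0" if i: "i < N" for i
    using eig_psd[OF M ev[rule_format, OF i]] unfolding r_def by auto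
  have "1 = prod_list (diag_mat B)" using detB det_upper_triangular[OF ut B] by simp
  also have "\<dots> = (\<Prod>i=0..<N. B $$ (i,i))" using B by (simp add: prod_list_diag_prod)
  also have "\<dots> = complex_of_real (\<Prod>i=0..<N. r i)" using Bii by simp
  finally have pr: "(\<Prod>i=0..<N. r i) = 1" by (metis of_real_eq_1_iff)
  have "tr B = (\<Sum>i<N. B $$ (i,i))" using B by (simp add: tr_def)
  also have "\<dots> = complex_of_real (\<Sum>i<N. r i)" using Bii by simp
  finally have trr: "tr B = complex_of_real (\<Sum>i<N. r i)" .
  have "sum_list (map r [0..<N]) \<ge> real (length (map r [0..<N]))"
    using rnn pr by (intro sum_ge_len) (auto simp: prod.distinct_set_conv_list[symmetric])
  then have "(\<Sum>i<N. r i) \<ge> real N"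
    by (simp add: sum.distinct_set_conv_list[symmetric] lessThan_atLeast0)
  then show ?thesis using trB trr by simp
qed

lemma upper_diag_mult: assumes B: "B \<in> carrier_mat N N" and C: "C \<in> carrier_mat N N"
  and uB: "upper_triangular B" and uC: "upper_triangular C" and i: "i < N"
  shows "(B * C) $$ (i,i) = B $$ (i,i) * C $$ (i,i)"
proof -
  have "(B * C) $$ (i,i) = (\<Sum>k<N. B $$ (i,k) * C $$ (k,i))" by (rule mult_index_sum[OF B C i i])
  also have "\<dots> = B $$ (i,i) * C $$ (i,i) + (\<Sum>k\<in>{..<N} - {i}. B $$ (i,k) * C $$ (k,i))"
    using i by (subst sum.remove[of _ i]) auto
  also have "(\<Sum>k\<in>{..<N} - {i}. B $$ (i,k) * C $$ (k,i)) = 0"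
  proof (rule sum.neutral, rule ballI)
    fix k assume k: "k \<in> {..<N} - {i}"
    show "B $$ (i,k) * C $$ (k,i) = 0"
    proof (cases "k < i")
      case True then show ?thesis using uB i B unfolding upper_triangular_def by auto
    next
      case False then have "i < k" using k by auto
      then show ?thesis using uC k C unfolding upper_triangular_def by auto
    qed
  qed
  finally show ?thesis by simp
qed


lemma det_E: fixes P :: "complex mat" assumes P: "P \<in> carrier_mat N N" and PP: "P * P = 1\<^sub>m N"
  and trP: "tr P = 0"
  shows "det (complex_of_real (cosh x) \<cdot>\<^sub>m 1\<^sub>m N + complex_of_real (sinh x) \<cdot>\<^sub>m P) = 1"
proof -
  define a where "a = complex_of_real (cosh x)"
  define b where "b = complex_of_real (sinh x)"
  define E where "E = a \<cdot>\<^sub>m 1\<^sub>m N + b \<cdot>\<^sub>m P"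
  have E: "E \<in> carrier_mat N N" unfolding E_def using P by auto
  obtain B U V where B: "B \<in> carrier_mat N N" and U: "U \<in> carrier_mat N N" and V: "V \<in> carrier_mat N N"
    and UV: "U * V = 1\<^sub>m N" and VU: "V * U = 1\<^sub>m N" and PB: "P = U * B * V"
    and ut: "upper_triangular B"
    using schur_ex[OF P] by blast
  have VPU: "V * P * U = B" unfolding PB using U V B VU
    by (simp add: assoc_mult_mat[of _ N N _ N _ N] VU[unfolded assoc_mult_mat[OF V U]] flip: assoc_mult_mat[OF V U B])
  have VP: "V * P \<in> carrier_mat N N" using V P by (rule mult_carrier_mat)
  have r1: "U * (V * X) = X" if X: "X \<in> carrier_mat N N" for X
    using U V X UV by (simp flip: assoc_mult_mat[OF U V X])
  have r2: "P * (P * X) = X" if X: "X \<in> carrier_mat N N" for X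
    using P X PP by (simp flip: assoc_mult_mat[OF P P X])
  have BB: "B * B = 1\<^sub>m N"
  proof -
    have "B * B = (V * (P * U)) * (V * (P * U))" using VPU V P U by simp
    also have "\<dots> = V * (P * (U * (V * (P * U))))"
    proof -
      have PU: "P * U \<in> carrier_mat N N" using P U by (rule mult_carrier_mat)
      have W: "V * (P * U) \<in> carrier_mat N N" using V PU by (rule mult_carrier_mat)
      show ?thesis by (simp only: assoc_mult_mat[OF V PU W] assoc_mult_mat[OF P U W])
    qed
    also have "\<dots> = V * U" using P U by (simp add: r1 r2)
    finally show ?thesis using VU by simp
  qed
  have Bsq: "B $$ (i,i) = 1 \<or> B $$ (i,i) = -1" if i: "i < N" for i
  proof -
    have "B $$ (i,i) * B $$ (i,i) = 1"
      using upper_diag_mult[OF B B ut ut i] BB i by simp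
    then show ?thesis by (metis power2_eq_1_iff power2_eq_square)
  qed
  have trB: "tr B = 0"
  proof -
    have "tr P = tr (V * (U * B))" unfolding PB
      by (rule tr_comm[OF mult_carrier_mat[OF U B] V])
    also have "V * (U * B) = B" using V U B VU by (simp add: assoc_mult_mat[symmetric, OF V U B])
    finally show ?thesis using trP by simp
  qed
  have VEU: "V * E * U = a \<cdot>\<^sub>m 1\<^sub>m N + b \<cdot>\<^sub>m B"
  proof -
    have "V * E = a \<cdot>\<^sub>m V + b \<cdot>\<^sub>m (V * P)" unfolding E_def
      by (simp only: mult_add_distrib_mat[OF V smult_carrier_mat[OF one_carrier_mat] smult_carrier_mat[OF P]]
        mult_smult_distrib[OF V one_carrier_mat] mult_smult_distrib[OF V P] right_mult_one_mat[OF V])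
    then have "V * E * U = (a \<cdot>\<^sub>m V + b \<cdot>\<^sub>m (V * P)) * U" by simp
    also have "\<dots> = a \<cdot>\<^sub>m (V * U) + b \<cdot>\<^sub>m (V * P * U)"
      by (simp only: add_mult_distrib_mat[OF smult_carrier_mat[OF V] smult_carrier_mat[OF VP] U]
        mult_smult_assoc_mat[OF V U] mult_smult_assoc_mat[OF VP U])
    finally show ?thesis using VU VPU by simp
  qed
  have "det (V * E * U) = det V * det E * det U"
    by (simp only: det_mult[OF mult_carrier_mat[OF V E] U] det_mult[OF V E])
  also have "\<dots> = det E * det (V * U)" by (simp add: det_mult[OF V U])
  finally have dE: "det E = det (a \<cdot>\<^sub>m 1\<^sub>m N + b \<cdot>\<^sub>m B)" using VU VEU by simp
  have C: "a \<cdot>\<^sub>m 1\<^sub>m N + b \<cdot>\<^sub>m B \<in> carrier_mat N N" using B by auto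
  have utC: "upper_triangular (a \<cdot>\<^sub>m 1\<^sub>m N + b \<cdot>\<^sub>m B)"
    using ut B unfolding upper_triangular_def by auto
  define s where "s i = Re (B $$ (i,i))" for i
  have Cii: "(a \<cdot>\<^sub>m 1\<^sub>m N + b \<cdot>\<^sub>m B) $$ (i,i) = complex_of_real (exp (x * s i))"
     and Bs: "B $$ (i,i) = complex_of_real (s i)" if i: "i < N" for i
  proof -
    have e: "(a \<cdot>\<^sub>m 1\<^sub>m N + b \<cdot>\<^sub>m B) $$ (i,i) = a + b * B $$ (i,i)" using i B by simp
    from Bsq[OF i] show "(a \<cdot>\<^sub>m 1\<^sub>m N + b \<cdot>\<^sub>m B) $$ (i,i) = complex_of_real (exp (x * s i))"
    proof
      assume h: "B $$ (i,i) = 1"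
      then have "s i = 1" by (simp add: s_def)
      then have ex: "exp (x * s i) = cosh x + sinh x" using cosh_plus_sinh[of x] by simp
      show ?thesis by (simp only: e h) (simp add: a_def b_def ex)
    next
      assume h: "B $$ (i,i) = -1"
      then have "s i = -1" by (simp add: s_def)
      then have ex: "exp (x * s i) = cosh x - sinh x" using cosh_minus_sinh[of x] by simp
      show ?thesis by (simp only: e h) (simp add: a_def b_def ex)
    qed
    from Bsq[OF i] show "B $$ (i,i) = complex_of_real (s i)" by (auto simp: s_def)
  qed
  have "det E = prod_list (diag_mat (a \<cdot>\<^sub>m 1\<^sub>m N + b \<cdot>\<^sub>m B))"
    using dE det_upper_triangular[OF utC C] by simp
  also have "\<dots> = (\<Prod>i=0..<N. complex_of_real (exp (x * s i)))"
    using carrier_matD[OF B] Cii by (simp add: prod_list_diag_prod)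
  also have "\<dots> = complex_of_real (exp (\<Sum>i=0..<N. x * s i))"
    by (simp add: exp_sum)
  also have "(\<Sum>i=0..<N. x * s i) = x * Re (tr B)"
    using B Bs by (simp add: tr_def s_def sum_distrib_left lessThan_atLeast0)
  finally show ?thesis using trB unfolding E_def a_def b_def by simp
qed


lemma smult_one_mat': "1 \<cdot>\<^sub>m X = (X::'a::semiring_1 mat)"
  by (rule eq_matI) auto

lemma prod_list_ones: "(\<forall>x\<in>set xs. f x = (1::'a::comm_monoid_mult)) \<Longrightarrow> prod_list (map f xs) = 1"
  by (induction xs) auto

lemma P_facts: assumes len: "length s = n" and ne: "s \<noteq> replicate n PI" and sg: "\<sigma> \<in> {1, -1::complex}"
  shows "\<sigma> \<cdot>\<^sub>m pauli_string s \<in> carrier_mat (2^n) (2^n)"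
    "(\<sigma> \<cdot>\<^sub>m pauli_string s) * (\<sigma> \<cdot>\<^sub>m pauli_string s) = 1\<^sub>m (2^n)"
    "adj (\<sigma> \<cdot>\<^sub>m pauli_string s) = \<sigma> \<cdot>\<^sub>m pauli_string s"
    "tr (\<sigma> \<cdot>\<^sub>m pauli_string s) = 0"
proof -
  have S: "pauli_string s \<in> carrier_mat (2^n) (2^n)" using ps_carrier[of s] len by simp
  note dS = carrier_matD[OF S]
  show "\<sigma> \<cdot>\<^sub>m pauli_string s \<in> carrier_mat (2^n) (2^n)" using S by simp
  have s2: "\<sigma> * \<sigma> = 1" using sg by auto
  have "(\<sigma> \<cdot>\<^sub>m pauli_string s) * (\<sigma> \<cdot>\<^sub>m pauli_string s) = \<sigma> \<cdot>\<^sub>m (pauli_string s * (\<sigma> \<cdot>\<^sub>m pauli_string s))"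
    by (rule mult_smult_assoc_mat[OF S smult_carrier_mat[OF S]])
  also have "pauli_string s * (\<sigma> \<cdot>\<^sub>m pauli_string s) = \<sigma> \<cdot>\<^sub>m (pauli_string s * pauli_string s)"
    by (rule mult_smult_distrib[OF S S])
  also have "pauli_string s * pauli_string s = 1\<^sub>m (2^n)" using ps_sq[of s] len by simp
  finally show "(\<sigma> \<cdot>\<^sub>m pauli_string s) * (\<sigma> \<cdot>\<^sub>m pauli_string s) = 1\<^sub>m (2^n)"
    by (simp add: smult_smult_mat' s2 smult_one_mat')
  have cs: "cnj \<sigma> = \<sigma>" using sg by auto
  show "adj (\<sigma> \<cdot>\<^sub>m pauli_string s) = \<sigma> \<cdot>\<^sub>m pauli_string s"
  proof (rule eq_matI)
    fix i j assume "i < dim_row (\<sigma> \<cdot>\<^sub>m pauli_string s)" "j < dim_col (\<sigma> \<cdot>\<^sub>m pauli_string s)"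
    then have i: "i < 2^n" and j: "j < 2^n" using dS by auto
    have "adj (pauli_string s) $$ (i,j) = pauli_string s $$ (i,j)" by (simp add: ps_adj)
    then have "cnj (pauli_string s $$ (j,i)) = pauli_string s $$ (i,j)" using i j dS by simp
    then show "adj (\<sigma> \<cdot>\<^sub>m pauli_string s) $$ (i,j) = (\<sigma> \<cdot>\<^sub>m pauli_string s) $$ (i,j)"
      using i j dS cs by simp
  qed (use dS in auto)
  have "tr (pauli_string s) = 0" using ps_tr[of s] len ne by simp
  then show "tr (\<sigma> \<cdot>\<^sub>m pauli_string s) = 0"
    using dS by (simp add: tr_def sum_distrib_left[symmetric])
qed

theorem mainTheorem2:
  fixes n J :: nat and \<tau> :: real and P :: "nat \<Rightarrow> complex mat"
  assumes "n \<ge> 1"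
    and "\<forall>j\<in>{1..J}. \<exists>s \<sigma>. length s = n \<and> s \<noteq> replicate n PI \<and> \<sigma> \<in> {1, -1::complex}
                          \<and> P j = \<sigma> \<cdot>\<^sub>m pauli_string s"
  shows "let E = (\<lambda>j. mat_exp (complex_of_real (- \<tau>) \<cdot>\<^sub>m P j));
             A = mat_prod_list (2^n) (map E [1..<J+1]) * 1\<^sub>m (2^n)
                 * mat_prod_list (2^n) (map E (rev [1..<J+1]))
         in mat_trace A \<in> \<real> \<and> Re (mat_trace A) \<ge> 2 ^ n"
proof -
  define N :: nat where "N = 2^n"
  define E where "E = (\<lambda>j. mat_exp (complex_of_real (- \<tau>) \<cdot>\<^sub>m P j))"
  define L where "L = [1..<J+1]"
  have Pj: "P j \<in> carrier_mat N N \<and> P j * P j = 1\<^sub>m N \<and> adj (P j) = P j \<and> tr (P j) = 0" if j: "j \<in> set L" for j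
  proof -
    have "j \<in> {1..J}" using j unfolding L_def by auto
    from assms(2)[rule_format, OF this] obtain s \<sigma> where "length s = n" "s \<noteq> replicate n PI" "\<sigma> \<in> {1, -1::complex}"
      "P j = \<sigma> \<cdot>\<^sub>m pauli_string s" by blast
    then show ?thesis using P_facts[of s n \<sigma>] unfolding N_def by simp
  qed
  have Ej: "E j \<in> carrier_mat N N \<and> adj (E j) = E j \<and> det (E j) = 1" if j: "j \<in> set L" for j
  proof -
    have P: "P j \<in> carrier_mat N N" and PP: "P j * P j = 1\<^sub>m N" and aP: "adj (P j) = P j"
      and tP: "tr (P j) = 0" using Pj[OF j] by auto
    have Eeq: "E j = complex_of_real (cosh (-\<tau>)) \<cdot>\<^sub>m 1\<^sub>m N + complex_of_real (sinh (-\<tau>)) \<cdot>\<^sub>m P j"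
      unfolding E_def by (rule mat_exp_invol[OF P PP])
    have c: "E j \<in> carrier_mat N N" unfolding Eeq using P by auto
    have "adj (E j) = E j"
    proof (rule eq_matI)
      fix a b assume "a < dim_row (E j)" "b < dim_col (E j)"
      then have a: "a < N" and b: "b < N" using c by auto
      have "adj (P j) $$ (a,b) = P j $$ (a,b)" using aP by simp
      then have "cnj (P j $$ (b,a)) = P j $$ (a,b)" using a b P by simp
      then show "adj (E j) $$ (a,b) = E j $$ (a,b)" using a b P unfolding Eeq by auto
    qed (use c in auto)
    moreover have "det (E j) = 1" unfolding Eeq by (rule det_E[OF P PP tP])
    ultimately show ?thesis using c by simp
  qed
  define M where "M = mat_prod_list N (map E L)"
  have cM: "\<forall>X\<in>set (map E L). X \<in> carrier_mat N N" using Ej by auto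
  have M: "M \<in> carrier_mat N N" unfolding M_def using mpl_carrier[OF cM] .
  have rev: "mat_prod_list N (map E (rev L)) = adj M"
    unfolding M_def rev_map[symmetric] by (rule mpl_rev) (use Ej in auto)
  have A: "mat_prod_list N (map E L) * 1\<^sub>m N * mat_prod_list N (map E (rev L)) = M * adj M"
    unfolding rev M_def[symmetric] using M by simp
  have dM: "det M = 1" unfolding M_def using mpl_det[OF cM] Ej by (simp add: prod_list_ones)
  have cM': "\<forall>X\<in>set (map E (rev L)). X \<in> carrier_mat N N" using Ej by auto
  have "det (adj M) = 1" unfolding rev[symmetric] using mpl_det[OF cM'] Ej by (simp add: prod_list_ones)
  then have dA: "det (M * adj M) = 1" using dM by (simp add: det_mult[OF M adj_carrier[OF M]])
  have mt: "mat_trace X = tr X" for X by (simp add: mat_trace_def tr_def)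
  show ?thesis unfolding Let_def E_def[symmetric] L_def[symmetric] N_def[symmetric] A mt
    using key[OF M dA] by (simp add: N_def)
qed
end
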